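(* Let $R$ be a Jacobi-Tsankov algebraic curvature tensor on $V$. Assume that $r(x)<m-1$ for all $x\in V$. Let $x\in S(V)$. Choose $y\in S(x^\perp)$ so that $J(x)y=0$. Then: \begin{enumerate} \item $J(y)x=0$ and $J(x)J(y)=0$. \item $0=J(y)^2+J(x)^2-4J(x,y)^2$, $J(x,y)J(x)=J(y)J(x,y)$, and $J(x)J(x,y)=J(x,y)J(y)$. \item Let $\{x,z_1,z_2\}$ be an orthonormal set. Suppose that $J(x)z_1=\lambda_1z_1$ and $J(x)z_2=\lambda_2z_2$ where $\lambda_1\ne\lambda_2$. Then $J(z_1)z_2=0$. \item We can choose an orthonormal basis for $V$ so that, in block form, $$ J(x)=\begin{pmatrix} A&0&0\\ 0&0&0\\ 0&0&0\end{pmatrix},\quad J(y)=\begin{pmatrix} 0&0&0\\ 0&A&0\\ 0&0&0\end{pmatrix},\quad J(x,y)=\frac12\begin{pmatrix} 0&A&0\\ A&0&0\\ 0&0&0\end{pmatrix}, $$ where $A=\operatorname{diag}(\lambda_1,\dots,\lambda_r)$ is the diagonal matrix of the non-zero eigenvalues of $J(x)$. \end{enumerate}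
   Context: $V$ is a real vector space of dimension $m\ge3$ with a positive definite inner product $\langle\cdot,\cdot\rangle$, and $S(V)=\{\xi\in V:\langle\xi,\xi\rangle=1\}$ is its unit sphere. $R\in\otimes^4V^*$ is an algebraic curvature tensor, i.e. $R(x,y,z,w)=R(z,w,x,y)=-R(y,x,z,w)$ and $R(x,y,z,w)+R(y,z,x,w)+R(z,x,y,w)=0$. The curvature operator $\mathcal{R}(x,y)$ is defined by $\langle\mathcal{R}(x,y)z,w\rangle=R(x,y,z,w)$, and the Jacobi operator is $J(x):y\mapsto\mathcal{R}(y,x)x$. $R$ is called Jacobi-Tsankov if $X\perp Y$ implies $J(X)J(Y)=J(Y)J(X)$. The polarized Jacobi operator is the self-adjoint operator $J(x,y):z\mapsto\frac12\mathcal{R}(z,x)y+\frac12\mathcal{R}(z,y)x$, so $J(x)=J(x,x)$. Finally $r(x):=\operatorname{Rank}\{J(x)\}$ (always $r(x)\le m-1$ since $J(x)x=0$). *)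

theory Defs
  imports "HOL-Analysis.Analysis"
begin

text \<open>V is modelled by a Euclidean space type 'a (finite dimensional real inner
product space); m = DIM('a). A 4-tensor R on V is a real function of four
vector arguments, linear in each.\<close>

definition multilinear4 :: "('a::real_vector \<Rightarrow> 'a \<Rightarrow> 'a \<Rightarrow> 'a \<Rightarrow> real) \<Rightarrow> bool" where
  "multilinear4 R \<longleftrightarrow>
     (\<forall>y z w. linear (\<lambda>x. R x y z w)) \<and> (\<forall>x z w. linear (\<lambda>y. R x y z w)) \<and>
     (\<forall>x y w. linear (\<lambda>z. R x y z w)) \<and> (\<forall>x y z. linear (\<lambda>w. R x y z w))"

definition alg_curv_tensor :: "('a::real_vector \<Rightarrow> 'a \<Rightarrow> 'a \<Rightarrow> 'a \<Rightarrow> real) \<Rightarrow> bool" where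
  "alg_curv_tensor R \<longleftrightarrow> multilinear4 R \<and>
     (\<forall>x y z w. R x y z w = R z w x y) \<and>
     (\<forall>x y z w. R x y z w = - R y x z w) \<and>
     (\<forall>x y z w. R x y z w + R y z x w + R z x y w = 0)"

definition curv_op :: "('a::euclidean_space \<Rightarrow> 'a \<Rightarrow> 'a \<Rightarrow> 'a \<Rightarrow> real) \<Rightarrow> 'a \<Rightarrow> 'a \<Rightarrow> 'a \<Rightarrow> 'a" where
  "curv_op R x y z = (\<Sum>b\<in>Basis. R x y z b *\<^sub>R b)"

definition jacobi_op :: "('a::euclidean_space \<Rightarrow> 'a \<Rightarrow> 'a \<Rightarrow> 'a \<Rightarrow> real) \<Rightarrow> 'a \<Rightarrow> 'a \<Rightarrow> 'a" where
  "jacobi_op R x y = curv_op R y x x"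

definition pjacobi_op :: "('a::euclidean_space \<Rightarrow> 'a \<Rightarrow> 'a \<Rightarrow> 'a \<Rightarrow> real) \<Rightarrow> 'a \<Rightarrow> 'a \<Rightarrow> 'a \<Rightarrow> 'a" where
  "pjacobi_op R x y z = (1/2) *\<^sub>R curv_op R z x y + (1/2) *\<^sub>R curv_op R z y x"

definition jacobi_tsankov :: "('a::euclidean_space \<Rightarrow> 'a \<Rightarrow> 'a \<Rightarrow> 'a \<Rightarrow> real) \<Rightarrow> bool" where
  "jacobi_tsankov R \<longleftrightarrow>
     (\<forall>X Y. X \<bullet> Y = 0 \<longrightarrow> jacobi_op R X \<circ> jacobi_op R Y = jacobi_op R Y \<circ> jacobi_op R X)"

definition jrank :: "('a::euclidean_space \<Rightarrow> 'a \<Rightarrow> 'a \<Rightarrow> 'a \<Rightarrow> real) \<Rightarrow> 'a \<Rightarrow> nat" where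
  "jrank R x = dim (range (jacobi_op R x))"

end

theory Submission
  imports Defs
begin


locale acurv =
  fixes R :: "'a::euclidean_space \<Rightarrow> 'a \<Rightarrow> 'a \<Rightarrow> 'a \<Rightarrow> real"
  assumes acr: "alg_curv_tensor R"
begin

lemma ml: "multilinear4 R" using acr[unfolded alg_curv_tensor_def] by (rule conjunct1)

lemma lin1: "linear (\<lambda>x. R x y z w)"
  using ml unfolding multilinear4_def by blast
lemma lin2: "linear (\<lambda>y. R x y z w)"
  using ml unfolding multilinear4_def by blast
lemma lin3: "linear (\<lambda>z. R x y z w)"
  using ml unfolding multilinear4_def by blast
lemma lin4: "linear (\<lambda>w. R x y z w)"
  using ml unfolding multilinear4_def by blast
lemma R_pair: "R x y z w = R z w x y" using acr unfolding alg_curv_tensor_def by blast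
lemma R_anti12: "R x y z w = - R y x z w" using acr unfolding alg_curv_tensor_def by blast
lemma R_bianchi: "R x y z w + R y z x w + R z x y w = 0" using acr unfolding alg_curv_tensor_def by blast
lemma R_anti34: "R x y z w = - R x y w z"
proof -
  have "R x y z w = R z w x y" by (rule R_pair)
  also have "\<dots> = - R w z x y" by (rule R_anti12)
  also have "R w z x y = R x y w z" by (rule R_pair)
  finally show ?thesis .
qed
lemma R_rev: "R b u v a = R a v u b"
proof -
  have "R b u v a = R v a b u" by (rule R_pair)
  also have "\<dots> = - R a v b u" by (rule R_anti12)
  also have "R a v b u = - R a v u b" by (rule R_anti34)
  finally show ?thesis by simp
qed
lemma R_same12[simp]: "R x x z w = 0" using R_anti12[of x x z w] by simp
lemma R_same34[simp]: "R x y z z = 0" using R_anti34[of x y z z] by simp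

lemma R_add1[simp]: "R (a+b) y z w = R a y z w + R b y z w" using linear_add[OF lin1] by blast
lemma R_add2[simp]: "R x (a+b) z w = R x a z w + R x b z w" using linear_add[OF lin2] by blast
lemma R_add3[simp]: "R x y (a+b) w = R x y a w + R x y b w" using linear_add[OF lin3] by blast
lemma R_add4[simp]: "R x y z (a+b) = R x y z a + R x y z b" using linear_add[OF lin4] by blast
lemma R_diff1[simp]: "R (a-b) y z w = R a y z w - R b y z w" using linear_diff[OF lin1] by blast
lemma R_diff2[simp]: "R x (a-b) z w = R x a z w - R x b z w" using linear_diff[OF lin2] by blast
lemma R_diff3[simp]: "R x y (a-b) w = R x y a w - R x y b w" using linear_diff[OF lin3] by blast
lemma R_diff4[simp]: "R x y z (a-b) = R x y z a - R x y z b" using linear_diff[OF lin4] by blast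
lemma R_scale1[simp]: "R (c *\<^sub>R a) y z w = c * R a y z w" using linear_scale[OF lin1] by simp
lemma R_scale2[simp]: "R x (c *\<^sub>R a) z w = c * R x a z w" using linear_scale[OF lin2] by simp
lemma R_scale3[simp]: "R x y (c *\<^sub>R a) w = c * R x y a w" using linear_scale[OF lin3] by simp
lemma R_scale4[simp]: "R x y z (c *\<^sub>R a) = c * R x y z a" using linear_scale[OF lin4] by simp
lemma R_neg1[simp]: "R (- a) y z w = - R a y z w" using linear_neg[OF lin1] by simp
lemma R_neg2[simp]: "R x (- a) z w = - R x a z w" using linear_neg[OF lin2] by simp
lemma R_neg3[simp]: "R x y (- a) w = - R x y a w" using linear_neg[OF lin3] by simp
lemma R_neg4[simp]: "R x y z (- a) = - R x y z a" using linear_neg[OF lin4] by simp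
lemma R_zero1[simp]: "R 0 y z w = 0" using linear_0[OF lin1] by simp
lemma R_zero2[simp]: "R x 0 z w = 0" using linear_0[OF lin2] by simp
lemma R_zero3[simp]: "R x y 0 w = 0" using linear_0[OF lin3] by simp
lemma R_zero4[simp]: "R x y z 0 = 0" using linear_0[OF lin4] by simp

lemma curv_inner[simp]: "curv_op R x y z \<bullet> w = R x y z w"
proof -
  have "curv_op R x y z \<bullet> w = (\<Sum>b\<in>Basis. R x y z b * (b \<bullet> w))"
    by (simp add: curv_op_def inner_sum_left)
  also have "\<dots> = R x y z (\<Sum>b\<in>Basis. (w \<bullet> b) *\<^sub>R b)"
    by (simp add: linear_sum[OF lin4] inner_commute mult.commute)
  also have "\<dots> = R x y z w" by (simp add: euclidean_representation)
  finally show ?thesis .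
qed

lemma jac_inner[simp]: "jacobi_op R u a \<bullet> b = R a u u b"
  by (simp add: jacobi_op_def)
lemma pj_inner[simp]: "pjacobi_op R u v a \<bullet> b = (R a u v b + R a v u b) / 2"
  by (simp add: pjacobi_op_def inner_add_left)

end

lemma my_vec_eqI: "(\<And>w. (a::'a::real_inner) \<bullet> w = b \<bullet> w) \<Longrightarrow> a = b"
  by (metis inner_diff_left inner_eq_zero_iff right_minus_eq)




context acurv begin

lemma jac_add[simp]: "jacobi_op R u (a+b) = jacobi_op R u a + jacobi_op R u b"
  by (rule my_vec_eqI) (simp add: inner_add_left)
lemma jac_scale[simp]: "jacobi_op R u (c *\<^sub>R a) = c *\<^sub>R jacobi_op R u a"
  by (rule my_vec_eqI) simp
lemma jac_neg[simp]: "jacobi_op R u (- a) = - jacobi_op R u a"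
  by (rule my_vec_eqI) (simp)
lemma jac_diff[simp]: "jacobi_op R u (a - b) = jacobi_op R u a - jacobi_op R u b"
  by (rule my_vec_eqI) (simp add: inner_diff_left)
lemma jac_zero[simp]: "jacobi_op R u 0 = 0"
  by (rule my_vec_eqI) simp
lemma jac_self[simp]: "jacobi_op R u u = 0"
  by (rule my_vec_eqI) simp
lemma jac_zero_op[simp]: "jacobi_op R 0 a = 0"
  by (rule my_vec_eqI) simp
lemma pj_add[simp]: "pjacobi_op R u v (a+b) = pjacobi_op R u v a + pjacobi_op R u v b"
  by (rule my_vec_eqI) (simp add: inner_add_left add_divide_distrib)
lemma pj_scale[simp]: "pjacobi_op R u v (c *\<^sub>R a) = c *\<^sub>R pjacobi_op R u v a"
  by (rule my_vec_eqI) (simp add: algebra_simps)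
lemma pj_neg[simp]: "pjacobi_op R u v (- a) = - pjacobi_op R u v a"
  by (rule my_vec_eqI) (simp add: algebra_simps)
lemma pj_diff[simp]: "pjacobi_op R u v (a - b) = pjacobi_op R u v a - pjacobi_op R u v b"
  by (simp only: diff_conv_add_uminus pj_add pj_neg)
lemma pj_zero[simp]: "pjacobi_op R u v 0 = 0"
  by (rule my_vec_eqI) simp

lemma jac_sym: "jacobi_op R u a \<bullet> b = a \<bullet> jacobi_op R u b"
  by (simp only: inner_commute[of a "jacobi_op R u b"] jac_inner R_rev[of b u u a])
lemma pj_sym: "pjacobi_op R u v a \<bullet> b = a \<bullet> pjacobi_op R u v b"
  by (simp only: inner_commute[of a "pjacobi_op R u v b"] pj_inner R_rev[of b u v a] R_rev[of b v u a] add.commute)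

lemma jac_comb: "jacobi_op R (a *\<^sub>R x + b *\<^sub>R y) w =
   (a*a) *\<^sub>R jacobi_op R x w + (2*a*b) *\<^sub>R pjacobi_op R x y w + (b*b) *\<^sub>R jacobi_op R y w"
  by (rule my_vec_eqI) (simp add: inner_add_left algebra_simps)

lemma jac_sum: "jacobi_op R (x + y) w =
   jacobi_op R x w + 2 *\<^sub>R pjacobi_op R x y w + jacobi_op R y w"
  using jac_comb[of 1 x 1 y w] by simp

end

lemma vaux:
  fixes a c p :: "'b::real_inner"
  assumes "(-2) *\<^sub>R (a + 2 *\<^sub>R p + c) = 2 *\<^sub>R (a - 2 *\<^sub>R p + c)"
  shows "a + c = 0"
proof (rule my_vec_eqI)
  fix t
  have h: "((-2) *\<^sub>R (a + 2 *\<^sub>R p + c)) \<bullet> t = (2 *\<^sub>R (a - 2 *\<^sub>R p + c)) \<bullet> t"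
    using assms by simp
  show "(a + c) \<bullet> t = 0 \<bullet> t" using h unfolding inner_add_left inner_diff_left inner_scaleR_left inner_zero_left
    by (simp add: algebra_simps)
qed

locale jtc = acurv +
  assumes jt: "jacobi_tsankov R"
begin

lemma comm: "u \<bullet> v = 0 \<Longrightarrow> jacobi_op R u (jacobi_op R v z) = jacobi_op R v (jacobi_op R u z)"
  using jt unfolding jacobi_tsankov_def by (metis comp_apply)

lemma comm_pj:
  assumes "x \<bullet> a = 0" "x \<bullet> b = 0"
  shows "jacobi_op R x (pjacobi_op R a b z) = pjacobi_op R a b (jacobi_op R x z)"
proof -
  have "x \<bullet> (a + b) = 0" using assms by (simp add: inner_add_right)
  from comm[OF this, of z] comm[OF assms(1), of z] comm[OF assms(2), of z]
  show ?thesis by (simp add: jac_sum)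
qed

lemma L1:
  assumes xy: "x \<bullet> y = 0" and n: "x \<bullet> x = y \<bullet> y" and Jxy: "jacobi_op R x y = 0"
  shows "jacobi_op R y x = 0 \<and> (\<forall>z. jacobi_op R x (jacobi_op R y z) = 0)"
proof -
  have Rz: "R (jacobi_op R x u) y y w = 0" if w: "x \<bullet> w = 0" for u w
  proof -
    have "jacobi_op R x (pjacobi_op R y w u) = pjacobi_op R y w (jacobi_op R x u)"
      using comm_pj[OF xy w] .
    hence "jacobi_op R x (pjacobi_op R y w u) \<bullet> y = pjacobi_op R y w (jacobi_op R x u) \<bullet> y" by simp
    hence "0 = pjacobi_op R y w (jacobi_op R x u) \<bullet> y"
      by (simp only: jac_sym Jxy) simp
    hence "R (jacobi_op R x u) y w y = 0" by simp
    thus ?thesis using R_anti34 by (metis neg_equal_0_iff_equal)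
  qed
  have YXx: "R (jacobi_op R x u) y y x = 0" for u
  proof -
    have "R (jacobi_op R x u) y y x = jacobi_op R y (jacobi_op R x u) \<bullet> x" by simp
    also have "\<dots> = jacobi_op R x u \<bullet> jacobi_op R y x" by (rule jac_sym)
    also have "\<dots> = u \<bullet> jacobi_op R x (jacobi_op R y x)" by (rule jac_sym)
    also have "\<dots> = 0" by (simp add: comm[OF xy])
    finally show ?thesis .
  qed
  have YX: "jacobi_op R y (jacobi_op R x u) = 0" for u
  proof (cases "x = 0")
    case True thus ?thesis by simp
  next
    case False
    hence xx: "x \<bullet> x \<noteq> 0" by simp
    show ?thesis
    proof (rule my_vec_eqI)
      fix w
      define w' where "w' = w - ((w \<bullet> x) / (x \<bullet> x)) *\<^sub>R x"
      have "x \<bullet> w' = 0" using xx by (simp add: w'_def inner_diff_right inner_commute)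
      hence "R (jacobi_op R x u) y y w' = 0" by (rule Rz)
      hence "R (jacobi_op R x u) y y w = 0" using YXx[of u] by (simp add: w'_def)
      thus "jacobi_op R y (jacobi_op R x u) \<bullet> w = 0 \<bullet> w" by simp
    qed
  qed
  have XY: "jacobi_op R x (jacobi_op R y z) = 0" for z
    using YX comm[OF xy] by simp
  have Py: "pjacobi_op R x y y = (- 1/2) *\<^sub>R jacobi_op R y x"
    by (rule my_vec_eqI) (simp add: R_anti12[of y x])
  have yx: "(-1) *\<^sub>R x + 1 *\<^sub>R y = y - x" by simp
  have o: "(x + y) \<bullet> (y - x) = 0" using xy n by (simp add: algebra_simps inner_commute)
  have e1: "jacobi_op R (x + y) s = jacobi_op R x s + 2 *\<^sub>R pjacobi_op R x y s + jacobi_op R y s" for s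
    by (rule jac_sum)
  have e2: "jacobi_op R (y - x) s = jacobi_op R x s - 2 *\<^sub>R pjacobi_op R x y s + jacobi_op R y s" for s
    using jac_comb[of "-1" x 1 y s, unfolded yx] by simp
  have a1: "jacobi_op R (y - x) y = (-2) *\<^sub>R pjacobi_op R x y y" using e2[of y] Jxy by simp
  have a2: "jacobi_op R (x + y) y = 2 *\<^sub>R pjacobi_op R x y y" using e1[of y] Jxy by simp
  have "jacobi_op R (x + y) (jacobi_op R (y - x) y) = jacobi_op R (y - x) (jacobi_op R (x + y) y)"
    by (rule comm[OF o])
  hence "(-2) *\<^sub>R jacobi_op R (x + y) (pjacobi_op R x y y) = 2 *\<^sub>R jacobi_op R (y - x) (pjacobi_op R x y y)"
    by (simp only: a1 a2 jac_scale)
  hence "(-2) *\<^sub>R (jacobi_op R x (pjacobi_op R x y y) + 2 *\<^sub>R pjacobi_op R x y (pjacobi_op R x y y) + jacobi_op R y (pjacobi_op R x y y))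
     = 2 *\<^sub>R (jacobi_op R x (pjacobi_op R x y y) - 2 *\<^sub>R pjacobi_op R x y (pjacobi_op R x y y) + jacobi_op R y (pjacobi_op R x y y))"
    by (simp only: e1 e2)
  hence "jacobi_op R x (pjacobi_op R x y y) + jacobi_op R y (pjacobi_op R x y y) = 0"
    by (rule vaux)
  hence "jacobi_op R y (jacobi_op R y x) = 0"
    by (simp add: Py XY)
  hence "jacobi_op R y x \<bullet> jacobi_op R y x = 0"
    by (metis inner_zero_right jac_sym)
  hence "jacobi_op R y x = 0" by (simp only: inner_eq_zero_iff)
  thus ?thesis using XY by blast
qed

end



lemma quartic_zero:
  fixes D A B :: real
  assumes "\<And>a b. a*a*b*b*D + 2*a*a*a*b*A + 2*a*b*b*b*B = 0"
  shows "D = 0 \<and> A = 0 \<and> B = 0"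
proof -
  have 1: "D + 2*A + 2*B = 0" using assms[of 1 1] by simp
  have 2: "D - 2*A - 2*B = 0" using assms[of 1 "-1"] by simp
  have 3: "4*D + 16*A + 4*B = 0" using assms[of 2 1] by simp
  from 1 2 3 show ?thesis by linarith
qed

context jtc begin

lemma L2:
  assumes xy: "x \<bullet> y = 0" and n: "x \<bullet> x = y \<bullet> y" and Jxy: "jacobi_op R x y = 0"
  shows "jacobi_op R y (jacobi_op R y v) + jacobi_op R x (jacobi_op R x v)
             - 4 *\<^sub>R pjacobi_op R x y (pjacobi_op R x y v) = 0"
    and "pjacobi_op R x y (jacobi_op R x v) = jacobi_op R y (pjacobi_op R x y v)"
    and "jacobi_op R x (pjacobi_op R x y v) = pjacobi_op R x y (jacobi_op R y v)"
proof -
  have L: "jacobi_op R y x = 0" "\<And>z. jacobi_op R x (jacobi_op R y z) = 0"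
    using L1[OF xy n Jxy] by auto
  have YX: "jacobi_op R y (jacobi_op R x z) = 0" for z
    using L(2) comm[OF xy] by simp
  have r1: "R y x x t = 0" for t using Jxy by (metis jac_inner inner_zero_left)
  have r2: "R x y y t = 0" for t using L(1) by (metis jac_inner inner_zero_left)
  have r3: "R x y x t = 0" for t using r1 R_anti12 by (metis neg_equal_0_iff_equal)
  have r4: "R y x y t = 0" for t using r2 R_anti12 by (metis neg_equal_0_iff_equal)
  have inst: "jacobi_op R (a *\<^sub>R x + b *\<^sub>R y) (jacobi_op R ((-b) *\<^sub>R x + a *\<^sub>R y) z) = 0" for a b z
  proof -
    let ?u = "a *\<^sub>R x + b *\<^sub>R y" and ?w = "(-b) *\<^sub>R x + a *\<^sub>R y"
    have o: "?u \<bullet> ?w = 0" using xy n by (simp add: algebra_simps inner_commute)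
    have nn: "?u \<bullet> ?u = ?w \<bullet> ?w" using xy n by (simp add: algebra_simps inner_commute)
    have J0: "jacobi_op R ?u ?w = 0"
      by (rule my_vec_eqI) (simp add: r1 r2 r3 r4 algebra_simps)
    show ?thesis using L1[OF o nn J0] by blast
  qed
  define X where "X = jacobi_op R x"
  define Y where "Y = jacobi_op R y"
  define P where "P = pjacobi_op R x y"
  have Xl: "X (p + q) = X p + X q" "X (c *\<^sub>R p) = c *\<^sub>R X p" for p q c by (simp_all add: X_def)
  have Yl: "Y (p + q) = Y p + Y q" "Y (c *\<^sub>R p) = c *\<^sub>R Y p" for p q c by (simp_all add: Y_def)
  have Pl: "P (p + q) = P p + P q" "P (c *\<^sub>R p) = c *\<^sub>R P p" for p q c by (simp_all add: P_def)
  have XY0: "X (Y v) = 0" "Y (X v) = 0" using YX L(2) by (simp_all add: X_def Y_def)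
  have E: "(a*a*b*b) * ((X (X v) + Y (Y v) - 4 *\<^sub>R P (P v)) \<bullet> t)
      + (2*a*a*a*b) * ((P (Y v) - X (P v)) \<bullet> t)
      + (2*a*b*b*b) * ((P (X v) - Y (P v)) \<bullet> t) = 0"
    for a b t
  proof -
    have h: "jacobi_op R (a *\<^sub>R x + b *\<^sub>R y) (jacobi_op R ((-b) *\<^sub>R x + a *\<^sub>R y) v) \<bullet> t = 0"
      by (simp only: inst inner_zero_left)
    have jw: "jacobi_op R ((-b) *\<^sub>R x + a *\<^sub>R y) v = (b*b) *\<^sub>R X v + (-2*a*b) *\<^sub>R P v + (a*a) *\<^sub>R Y v"
      using jac_comb[of "-b" x a y v] by (simp add: X_def Y_def P_def)
    have ju: "jacobi_op R (a *\<^sub>R x + b *\<^sub>R y) s = (a*a) *\<^sub>R X s + (2*a*b) *\<^sub>R P s + (b*b) *\<^sub>R Y s" for s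
      by (simp add: jac_comb X_def Y_def P_def)
    have "jacobi_op R (a *\<^sub>R x + b *\<^sub>R y) (jacobi_op R ((-b) *\<^sub>R x + a *\<^sub>R y) v) \<bullet> t
      = (a*a) * ((b*b) * (X (X v) \<bullet> t) + (-2*a*b) * (X (P v) \<bullet> t) + (a*a) * (X (Y v) \<bullet> t))
      + (2*a*b) * ((b*b) * (P (X v) \<bullet> t) + (-2*a*b) * (P (P v) \<bullet> t) + (a*a) * (P (Y v) \<bullet> t))
      + (b*b) * ((b*b) * (Y (X v) \<bullet> t) + (-2*a*b) * (Y (P v) \<bullet> t) + (a*a) * (Y (Y v) \<bullet> t))"
      unfolding ju jw Xl Yl Pl by (simp only: inner_add_left inner_scaleR_left)
    note eq = this
    have h2: "(a*a) * ((b*b) * (X (X v) \<bullet> t) + (-2*a*b) * (X (P v) \<bullet> t) + (a*a) * (X (Y v) \<bullet> t))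
      + (2*a*b) * ((b*b) * (P (X v) \<bullet> t) + (-2*a*b) * (P (P v) \<bullet> t) + (a*a) * (P (Y v) \<bullet> t))
      + (b*b) * ((b*b) * (Y (X v) \<bullet> t) + (-2*a*b) * (Y (P v) \<bullet> t) + (a*a) * (Y (Y v) \<bullet> t)) = 0"
      by (subst eq[symmetric]) (rule h)
    have z: "X (Y v) \<bullet> t = 0" "Y (X v) \<bullet> t = 0" using XY0 by simp_all
    have "(a*a*b*b) * ((X (X v) + Y (Y v) - 4 *\<^sub>R P (P v)) \<bullet> t)
      + (2*a*a*a*b) * ((P (Y v) - X (P v)) \<bullet> t)
      + (2*a*b*b*b) * ((P (X v) - Y (P v)) \<bullet> t) =
      (a*a) * ((b*b) * (X (X v) \<bullet> t) + (-2*a*b) * (X (P v) \<bullet> t) + (a*a) * (X (Y v) \<bullet> t))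
      + (2*a*b) * ((b*b) * (P (X v) \<bullet> t) + (-2*a*b) * (P (P v) \<bullet> t) + (a*a) * (P (Y v) \<bullet> t))
      + (b*b) * ((b*b) * (Y (X v) \<bullet> t) + (-2*a*b) * (Y (P v) \<bullet> t) + (a*a) * (Y (Y v) \<bullet> t))"
      unfolding z inner_add_left inner_diff_left inner_scaleR_left by (simp add: algebra_simps)
    with h2 show ?thesis by simp
  qed
  have Z: "(X (X v) + Y (Y v) - 4 *\<^sub>R P (P v)) \<bullet> t = 0 \<and> (P (Y v) - X (P v)) \<bullet> t = 0
      \<and> (P (X v) - Y (P v)) \<bullet> t = 0" for t
    by (rule quartic_zero) (use E in blast)
  have Z1: "X (X v) + Y (Y v) - 4 *\<^sub>R P (P v) = 0" using Z[of "X (X v) + Y (Y v) - 4 *\<^sub>R P (P v)"] by simp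
  have Z2: "P (Y v) - X (P v) = 0" using Z[of "P (Y v) - X (P v)"] by simp
  have Z3: "P (X v) - Y (P v) = 0" using Z[of "P (X v) - Y (P v)"] by simp
  show "jacobi_op R y (jacobi_op R y v) + jacobi_op R x (jacobi_op R x v)
             - 4 *\<^sub>R pjacobi_op R x y (pjacobi_op R x y v) = 0"
    using Z1 by (simp add: X_def Y_def P_def add.commute)
  show "pjacobi_op R x y (jacobi_op R x v) = jacobi_op R y (pjacobi_op R x y v)"
    using Z3 by (simp add: X_def Y_def P_def)
  show "jacobi_op R x (pjacobi_op R x y v) = pjacobi_op R x y (jacobi_op R y v)"
    using Z2 by (simp add: X_def Y_def P_def)
qed

lemma L3:
  assumes o1: "x \<bullet> z1 = 0" and o2: "x \<bullet> z2 = 0"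
    and e1: "jacobi_op R x z1 = l1 *\<^sub>R z1" and e2: "jacobi_op R x z2 = l2 *\<^sub>R z2"
    and ne: "l1 \<noteq> l2"
  shows "jacobi_op R z1 z2 = 0"
proof -
  define v where "v = jacobi_op R z1 z2"
  have Xv: "jacobi_op R x v = l2 *\<^sub>R v"
    unfolding v_def comm[OF o1] e2 by simp
  have c: "jacobi_op R x (pjacobi_op R z2 z1 z1) = pjacobi_op R z2 z1 (jacobi_op R x z1)"
    by (rule comm_pj[OF o2 o1])
  have "l2 * (pjacobi_op R z2 z1 z1 \<bullet> v) = pjacobi_op R z2 z1 z1 \<bullet> jacobi_op R x v"
    by (simp only: Xv inner_scaleR_right)
  also have "\<dots> = jacobi_op R x (pjacobi_op R z2 z1 z1) \<bullet> v"
    by (simp only: jac_sym)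
  also have "\<dots> = l1 * (pjacobi_op R z2 z1 z1 \<bullet> v)"
    by (simp only: c e1 pj_scale inner_scaleR_left)
  finally have "(l2 - l1) * (pjacobi_op R z2 z1 z1 \<bullet> v) = 0" by (simp add: algebra_simps)
  hence "pjacobi_op R z2 z1 z1 \<bullet> v = 0" using ne by simp
  hence r: "R z1 z2 z1 v = 0" by simp
  have "v \<bullet> v = R z2 z1 z1 v" by (simp add: v_def)
  also have "\<dots> = - R z1 z2 z1 v" by (rule R_anti12)
  also have "\<dots> = 0" using r by simp
  finally show ?thesis unfolding v_def[symmetric] by (simp only: inner_eq_zero_iff)
qed

end



lemma quad_zero:
  fixes \<alpha> \<beta> :: real
  assumes "\<And>t. 2*t*\<alpha> + t*t*\<beta> \<le> 0"
  shows "\<alpha> = 0"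
proof -
  define d where "d = \<bar>\<beta>\<bar> + 1"
  have d: "d > 0" by (simp add: d_def)
  have h: "2*(\<alpha>/d)*\<alpha> + (\<alpha>/d)*(\<alpha>/d)*\<beta> \<le> 0" by (rule assms)
  have "(2*(\<alpha>/d)*\<alpha> + (\<alpha>/d)*(\<alpha>/d)*\<beta>) * (d*d) = (\<alpha>*\<alpha>)*(2*d + \<beta>)"
    using d by (simp add: field_simps)
  moreover have "(2*(\<alpha>/d)*\<alpha> + (\<alpha>/d)*(\<alpha>/d)*\<beta>) * (d*d) \<le> 0"
    using h d by (simp add: mult_nonpos_nonneg)
  ultimately have le: "(\<alpha>*\<alpha>)*(2*d + \<beta>) \<le> 0" by simp
  have pos: "2*d + \<beta> > 0" unfolding d_def by (cases "\<beta> \<ge> 0") (simp_all add: abs_if)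
  show ?thesis
  proof (rule ccontr)
    assume "\<alpha> \<noteq> 0"
    hence "\<alpha>*\<alpha> > 0" by (metis not_real_square_gt_zero)
    with pos have "(\<alpha>*\<alpha>)*(2*d + \<beta>) > 0" by simp
    with le show False by simp
  qed
qed

lemma sym_eigen:
  fixes f :: "'a::euclidean_space \<Rightarrow> 'a"
  assumes lin: "linear f" and sym: "\<And>u v. f u \<bullet> v = u \<bullet> f v"
    and S: "subspace S" and inv: "\<And>s. s \<in> S \<Longrightarrow> f s \<in> S" and ne: "S \<noteq> {0}"
  shows "\<exists>v\<in>S. norm v = 1 \<and> f v = (v \<bullet> f v) *\<^sub>R v"
proof -
  define K where "K = sphere (0::'a) 1 \<inter> S"
  have cK: "compact K" unfolding K_def
    by (rule compact_Int_closed) (auto intro: closed_subspace S)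
  obtain s where s: "s \<in> S" "s \<noteq> 0" using ne S subspace_0 by blast
  have "s /\<^sub>R norm s \<in> K" unfolding K_def using s S by (auto intro: subspace_scale)
  hence neK: "K \<noteq> {}" by blast
  have bl: "bounded_linear f" using lin by (simp add: linear_conv_bounded_linear)
  have cont: "continuous_on K (\<lambda>v. f v \<bullet> v)"
    by (intro continuous_intros linear_continuous_on bl)
  obtain v where vK: "v \<in> K" and vmax: "\<And>y. y \<in> K \<Longrightarrow> f y \<bullet> y \<le> f v \<bullet> v"
    using continuous_attains_sup[OF cK neK cont] by blast
  have vS: "v \<in> S" and nv: "norm v = 1" using vK by (auto simp: K_def)
  have vv: "v \<bullet> v = 1" using nv by (simp add: dot_square_norm)
  define M where "M = f v \<bullet> v"
  define w where "w = f v - (v \<bullet> f v) *\<^sub>R v"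
  have wS: "w \<in> S" unfolding w_def using vS inv S by (auto intro: subspace_diff subspace_scale)
  have vw: "v \<bullet> w = 0" unfolding w_def by (simp add: inner_diff_right vv)
  have fvw: "f v \<bullet> w = w \<bullet> w"
  proof -
    have "f v = w + (v \<bullet> f v) *\<^sub>R v" by (simp add: w_def)
    hence "f v \<bullet> w = (w + (v \<bullet> f v) *\<^sub>R v) \<bullet> w" by simp
    also have "\<dots> = w \<bullet> w" using vw by (simp add: inner_add_left inner_commute[of v w])
    finally show ?thesis .
  qed
  have ineq: "2*t*(w \<bullet> w) + t*t*(f w \<bullet> w - M * (w \<bullet> w)) \<le> 0" for t
  proof -
    define u where "u = v + t *\<^sub>R w"
    have uu: "u \<bullet> u = 1 + t*t*(w \<bullet> w)" unfolding u_def
      using vv vw by (simp add: inner_add_left inner_add_right inner_commute)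
    have upos: "u \<bullet> u > 0" unfolding uu by (simp add: add_pos_nonneg)
    define n where "n = norm u"
    have n: "n > 0" "n * n = u \<bullet> u" using upos by (auto simp: n_def dot_square_norm power2_eq_square)
    have uS: "u \<in> S" unfolding u_def using vS wS S by (auto intro: subspace_add subspace_scale)
    have "u /\<^sub>R n \<in> K" unfolding K_def using uS n S by (auto intro: subspace_scale simp: n_def)
    hence "f (u /\<^sub>R n) \<bullet> (u /\<^sub>R n) \<le> M" using vmax M_def by blast
    moreover have "f (u /\<^sub>R n) \<bullet> (u /\<^sub>R n) = (f u \<bullet> u) / (n * n)"
      using linear_scale[OF lin] by (simp add: divide_inverse)
    ultimately have "(f u \<bullet> u) / (n*n) \<le> M" by simp
    moreover have nn: "n * n > 0" using n(1) by simp
    ultimately have "f u \<bullet> u \<le> M * (n * n)" using pos_divide_le_eq[OF nn] by simp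
    hence fuu: "f u \<bullet> u \<le> M * (u \<bullet> u)" using n(2) by simp
    have fw: "f w \<bullet> v = f v \<bullet> w" using sym[of w v] by (simp add: inner_commute)
    have "f u \<bullet> u = M + 2*t*(f v \<bullet> w) + t*t*(f w \<bullet> w)"
      unfolding u_def M_def using linear_add[OF lin] linear_scale[OF lin] fw
      by (simp add: inner_add_left inner_add_right algebra_simps)
    with fuu uu fvw show ?thesis by (simp add: algebra_simps)
  qed
  have "w \<bullet> w = 0" by (rule quad_zero) (rule ineq)
  hence "w = 0" by simp
  hence "f v = (v \<bullet> f v) *\<^sub>R v" by (simp add: w_def)
  thus ?thesis using vS nv by blast
qed

lemma spectral:
  fixes f :: "'a::euclidean_space \<Rightarrow> 'a"
  assumes lin: "linear f" and sym: "\<And>u v. f u \<bullet> v = u \<bullet> f v"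
  shows "subspace S \<Longrightarrow> (\<forall>s\<in>S. f s \<in> S) \<Longrightarrow> \<exists>B. B \<subseteq> S \<and> pairwise orthogonal B \<and> (\<forall>b\<in>B. norm b = 1)
      \<and> span B = S \<and> (\<forall>b\<in>B. f b = (b \<bullet> f b) *\<^sub>R b)"
proof (induction "dim S" arbitrary: S rule: less_induct)
  case less
  show ?case
  proof (cases "S = {0}")
    case True
    thus ?thesis by (intro exI[of _ "{}"]) auto
  next
    case False
    obtain v where vS: "v \<in> S" and nv: "norm v = 1" and ev: "f v = (v \<bullet> f v) *\<^sub>R v"
      using sym_eigen[OF lin sym less.prems(1) _ False] less.prems(2) by blast
    have vv: "v \<bullet> v = 1" using nv by (simp add: dot_square_norm)
    define S' where "S' = S \<inter> {w. v \<bullet> w = 0}"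
    have sub': "subspace S'" unfolding S'_def subspace_def using less.prems(1)
      by (auto simp: inner_add_right subspace_0 subspace_add subspace_scale)
    have inv': "\<forall>s\<in>S'. f s \<in> S'"
    proof
      fix s assume s: "s \<in> S'"
      have "v \<bullet> f s = f v \<bullet> s" using sym[of v s] by simp
      also have "\<dots> = (v \<bullet> f v) * (v \<bullet> s)" by (subst ev) simp
      also have "\<dots> = 0" using s by (simp add: S'_def)
      finally show "f s \<in> S'" using s less.prems(2) by (auto simp: S'_def)
    qed
    have "v \<notin> S'" using vv by (simp add: S'_def)
    have "S' \<subseteq> S" by (auto simp: S'_def)
    moreover have "S' \<noteq> S" using \<open>v \<notin> S'\<close> vS by blast
    ultimately have "S' \<subset> S" by blast
    moreover have sp1: "span S' = S'" using sub' by simp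
    moreover have sp2: "span S = S" using less.prems(1) by simp
    ultimately have "dim S' < dim S" using dim_psubset[of S' S] by (simp only: sp1 sp2)
    then obtain B' where B': "B' \<subseteq> S'" "pairwise orthogonal B'" "\<forall>b\<in>B'. norm b = 1"
      "span B' = S'" "\<forall>b\<in>B'. f b = (b \<bullet> f b) *\<^sub>R b"
      using less.hyps[OF _ sub' inv'] by blast
    show ?thesis
    proof (intro exI[of _ "insert v B'"] conjI)
      show "insert v B' \<subseteq> S" using vS B'(1) by (auto simp: S'_def)
      show "pairwise orthogonal (insert v B')"
        using B'(1,2) by (intro pairwise_orthogonal_insert) (auto simp: S'_def orthogonal_def)
      show "\<forall>b\<in>insert v B'. norm b = 1" using nv B'(3) by auto
      show "\<forall>b\<in>insert v B'. f b = (b \<bullet> f b) *\<^sub>R b" using ev B'(5) by auto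
      show "span (insert v B') = S"
      proof
        show "span (insert v B') \<subseteq> S"
          using vS B'(1) less.prems(1) by (intro span_minimal) (auto simp: S'_def)
        show "S \<subseteq> span (insert v B')"
        proof
          fix s assume s: "s \<in> S"
          have "s - (v \<bullet> s) *\<^sub>R v \<in> S'"
            using s vS vv less.prems(1) by (auto simp: S'_def inner_diff_right intro: subspace_diff subspace_scale)
          hence "s - (v \<bullet> s) *\<^sub>R v \<in> span B'" using B'(4) by simp
          thus "s \<in> span (insert v B')" by (auto simp: span_breakdown_eq)
        qed
      qed
    qed
  qed
qed




context jtc begin

declare jac_inner[simp del] pj_inner[simp del]

lemma lin_jac: "linear (jacobi_op R u)"
  by (rule linearI) simp_all

lemma L4:
  assumes xy: "x \<bullet> y = 0" and n: "x \<bullet> x = y \<bullet> y" and Jxy: "jacobi_op R x y = 0"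
  shows "\<exists>(e::nat \<Rightarrow> 'a) (r::nat) (lam::nat \<Rightarrow> real).
        2 * r \<le> DIM('a)
      \<and> (\<forall>i<DIM('a). \<forall>j<DIM('a). e i \<bullet> e j = (if i = j then 1 else 0))
      \<and> (\<forall>i<r. lam i \<noteq> 0)
      \<and> (\<forall>i<r. jacobi_op R x (e i) = lam i *\<^sub>R e i
              \<and> jacobi_op R x (e (r + i)) = 0
              \<and> jacobi_op R y (e i) = 0
              \<and> jacobi_op R y (e (r + i)) = lam i *\<^sub>R e (r + i)
              \<and> pjacobi_op R x y (e i) = (lam i / 2) *\<^sub>R e (r + i)
              \<and> pjacobi_op R x y (e (r + i)) = (lam i / 2) *\<^sub>R e i)
      \<and> (\<forall>i. 2 * r \<le> i \<and> i < DIM('a) \<longrightarrow>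
              jacobi_op R x (e i) = 0 \<and> jacobi_op R y (e i) = 0 \<and> pjacobi_op R x y (e i) = 0)"
proof -
  define X where "X = jacobi_op R x"
  define Y where "Y = jacobi_op R y"
  define P where "P = pjacobi_op R x y"
  have Xl[simp]: "X (p + q) = X p + X q" "X (c *\<^sub>R p) = c *\<^sub>R X p" "X 0 = 0" for p q c by (simp_all add: X_def)
  have Yl[simp]: "Y (p + q) = Y p + Y q" "Y (c *\<^sub>R p) = c *\<^sub>R Y p" "Y 0 = 0" for p q c by (simp_all add: Y_def)
  have Pl[simp]: "P (p + q) = P p + P q" "P (c *\<^sub>R p) = c *\<^sub>R P p" "P 0 = 0" for p q c by (simp_all add: P_def)
  have Xs: "X p \<bullet> q = p \<bullet> X q" for p q unfolding X_def by (rule jac_sym)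
  have Ys: "Y p \<bullet> q = p \<bullet> Y q" for p q unfolding Y_def by (rule jac_sym)
  have Ps: "P p \<bullet> q = p \<bullet> P q" for p q unfolding P_def by (rule pj_sym)
  have XY0: "X (Y z) = 0" for z using L1[OF xy n Jxy] by (simp add: X_def Y_def)
  have YX0: "Y (X z) = 0" for z using XY0[of z] comm[OF xy, of z] by (simp add: X_def Y_def)
  have PP: "4 *\<^sub>R P (P v) = Y (Y v) + X (X v)" for v
    using L2(1)[OF xy n Jxy, of v] by (simp add: X_def Y_def P_def algebra_simps)
  have PX: "P (X v) = Y (P v)" for v using L2(2)[OF xy n Jxy, of v] by (simp add: X_def Y_def P_def)
  have XP: "X (P v) = P (Y v)" for v using L2(3)[OF xy n Jxy, of v] by (simp add: X_def Y_def P_def)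
  obtain B where B: "pairwise orthogonal B" "\<forall>b\<in>B. norm b = 1" "span B = UNIV"
      "\<forall>b\<in>B. X b = (b \<bullet> X b) *\<^sub>R b"
    using spectral[OF lin_jac[of x] jac_sym, of UNIV] by (auto simp: X_def)
  have B0: "0 \<notin> B" using B(2) by force
  have finB: "finite B" using pairwise_orthogonal_independent[OF B(1) B0] finiteI_independent by blast
  define F where "F = {b\<in>B. X b \<noteq> 0}"
  have finF: "finite F" using finB by (simp add: F_def)
  define r where "r = card F"
  obtain h where h: "bij_betw h {0..<r} F" using ex_bij_betw_nat_finite[OF finF] r_def by blast
  define lam where "lam = (\<lambda>i. h i \<bullet> X (h i))"
  define g where "g = (\<lambda>i. (2 / lam i) *\<^sub>R P (h i))"
  have hF: "h i \<in> F" if "i < r" for i using h that by (auto simp: bij_betw_def)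
  have hB: "h i \<in> B" and hX: "X (h i) \<noteq> 0" if "i < r" for i using hF[OF that] by (auto simp: F_def)
  have eig: "X (h i) = lam i *\<^sub>R h i" if "i < r" for i using B(4) hB[OF that] by (simp add: lam_def)
  have lam0: "lam i \<noteq> 0" if "i < r" for i using eig[OF that] hX[OF that] by auto
  have hh: "h i \<bullet> h j = (if i = j then 1 else 0)" if "i < r" "j < r" for i j
  proof (cases "i = j")
    case True thus ?thesis using B(2) hB[OF that(1)] by (simp add: dot_square_norm)
  next
    case False
    hence "h i \<noteq> h j" using h that by (auto simp: bij_betw_def inj_on_def)
    thus ?thesis using B(1) hB[OF that(1)] hB[OF that(2)] False by (auto simp: pairwise_def orthogonal_def)
  qed
  have hinv: "h i = (1 / lam i) *\<^sub>R X (h i)" if "i < r" for i using eig[OF that] lam0[OF that] by simp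
  have Yh: "Y (h i) = 0" if "i < r" for i by (subst hinv[OF that]) (simp add: YX0)
  have Pf: "P (h i) = (lam i / 2) *\<^sub>R g i" if "i < r" for i using lam0[OF that] by (simp add: g_def)
  have Xg: "X (g i) = 0" if "i < r" for i using Yh[OF that] by (simp add: g_def XP)
  have Yg: "Y (g i) = lam i *\<^sub>R g i" if "i < r" for i
    using lam0[OF that] by (simp add: g_def PX[symmetric] eig[OF that])
  have Pg: "P (g i) = (lam i / 2) *\<^sub>R h i" if "i < r" for i
  proof -
    have "P (P (h i)) = (1/4) *\<^sub>R (4 *\<^sub>R P (P (h i)))" by simp
    also have "\<dots> = (1/4) *\<^sub>R ((lam i * lam i) *\<^sub>R h i)"
      by (simp only: PP Yh[OF that] eig[OF that] Yl Xl) simp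
    finally have "P (P (h i)) = (lam i * lam i / 4) *\<^sub>R h i" by simp
    thus ?thesis using lam0[OF that] by (simp add: g_def)
  qed
  have gg: "g i \<bullet> g j = (if i = j then 1 else 0)" if "i < r" "j < r" for i j
  proof -
    have "g i \<bullet> g j = (2 / lam i) * (P (h i) \<bullet> g j)" by (simp add: g_def)
    also have "\<dots> = (2 / lam i) * (h i \<bullet> P (g j))" by (simp only: Ps)
    also have "\<dots> = (2 / lam i) * (lam j / 2) * (h i \<bullet> h j)" by (simp add: Pg[OF that(2)])
    finally show ?thesis using hh[OF that] lam0[OF that(1)] by auto
  qed
  have hg: "h i \<bullet> g j = 0" if "i < r" "j < r" for i j
  proof -
    have "h i \<bullet> g j = (1 / lam i) * (X (h i) \<bullet> g j)" by (subst hinv[OF that(1)]) simp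
    also have "\<dots> = (1 / lam i) * (h i \<bullet> X (g j))" by (simp only: Xs)
    also have "\<dots> = 0" by (simp add: Xg[OF that(2)])
    finally show ?thesis .
  qed
  have gh: "g i \<bullet> h j = 0" if "i < r" "j < r" for i j using hg[OF that(2,1)] by (simp add: inner_commute)
  define T where "T = h ` {0..<r} \<union> g ` {0..<r}"
  have Tn: "t \<bullet> t = 1" if "t \<in> T" for t using that hh gg by (auto simp: T_def)
  have T0: "0 \<notin> T" using Tn by force
  have pwT: "pairwise orthogonal T"
    unfolding pairwise_def orthogonal_def T_def using hh gg hg gh by auto
  obtain U where U: "U \<inter> insert 0 T = {}" "pairwise orthogonal (T \<union> U)" "span (T \<union> U) = span (T \<union> UNIV)"
    using orthogonal_extension_strong[OF pwT, of UNIV] by blast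
  have tu: "t \<bullet> u = 0" if "t \<in> T" "u \<in> U" for t u
  proof -
    have "t \<noteq> u" using U(1) that by auto
    thus ?thesis using U(2) that by (auto simp: pairwise_def orthogonal_def)
  qed
  have U0: "u \<noteq> 0" if "u \<in> U" for u using U(1) that by auto
  define U' where "U' = (\<lambda>u. u /\<^sub>R norm u) ` U"
  have U'n: "norm u' = 1" if "u' \<in> U'" for u' using that U0 by (auto simp: U'_def)
  have U'nn: "u' \<bullet> u' = 1" if "u' \<in> U'" for u' using U'n[OF that] by (simp add: dot_square_norm)
  have tu': "t \<bullet> u' = 0" if "t \<in> T" "u' \<in> U'" for t u' using that tu by (auto simp: U'_def)
  have uu': "u1 \<bullet> u2 = 0" if uu: "u1 \<in> U'" "u2 \<in> U'" "u1 \<noteq> u2" for u1 u2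
  proof -
    obtain v1 v2 where v: "v1 \<in> U" "v2 \<in> U" "u1 = v1 /\<^sub>R norm v1" "u2 = v2 /\<^sub>R norm v2"
      using uu(1,2) by (auto simp: U'_def)
    hence "v1 \<noteq> v2" using uu(3) by auto
    hence "v1 \<bullet> v2 = 0" using U(2) v(1,2) by (auto simp: pairwise_def orthogonal_def)
    thus ?thesis using v by simp
  qed
  have ut': "u' \<bullet> t = 0" if "t \<in> T" "u' \<in> U'" for t u' using tu'[OF that] by (simp add: inner_commute)
  define C where "C = T \<union> U'"
  have C0: "0 \<notin> C" using T0 U'n by (force simp: C_def)
  have pwC: "pairwise orthogonal C"
    unfolding pairwise_def orthogonal_def C_def
    using pwT uu' tu' ut' by (auto simp: pairwise_def orthogonal_def)
  have indC: "independent C" by (rule pairwise_orthogonal_independent[OF pwC C0])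
  have spC: "span C = UNIV"
  proof -
    have "T \<union> U \<subseteq> span C"
    proof
      fix z assume "z \<in> T \<union> U"
      thus "z \<in> span C"
      proof
        assume "z \<in> T" thus ?thesis by (auto simp: C_def intro: span_base)
      next
        assume zU: "z \<in> U"
        hence "z /\<^sub>R norm z \<in> C" by (auto simp: C_def U'_def)
        hence "norm z *\<^sub>R (z /\<^sub>R norm z) \<in> span C" by (intro span_mul span_base)
        thus ?thesis using U0[OF zU] by simp
      qed
    qed
    hence "span (T \<union> U) \<subseteq> span C" by (intro span_minimal) auto
    moreover have "span (T \<union> U) = UNIV" using U(3) by simp
    ultimately show ?thesis by auto
  qed
  have cardC: "card C = DIM('a)" using indep_card_eq_dim_span[OF indC] spC by simp
  have finC: "finite C" using indC finiteI_independent by blast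
  have TU'd: "T \<inter> U' = {}" using Tn tu' by force
  have injh: "inj_on h {0..<r}" using h by (simp add: bij_betw_def)
  have injg: "inj_on g {0..<r}"
  proof (rule inj_onI)
    fix i j assume ij: "i \<in> {0..<r}" "j \<in> {0..<r}" "g i = g j"
    hence "g i \<bullet> g j = 1" using gg[of i i] by simp
    thus "i = j" using gg[of i j] ij by (auto split: if_splits)
  qed
  have hgd: "h ` {0..<r} \<inter> g ` {0..<r} = {}" using hh hg by fastforce
  have cardT: "card T = 2 * r"
    unfolding T_def using card_Un_disjoint[OF _ _ hgd] card_image[OF injh] card_image[OF injg] by simp
  have finU': "finite U'" using finC by (simp add: C_def)
  have finT: "finite T" using finC by (simp add: C_def)
  have cardsum: "DIM('a) = 2 * r + card U'"
    using cardC card_Un_disjoint[OF finT finU' TU'd] cardT by (simp add: C_def)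
  obtain k where k: "bij_betw k {0..<card U'} U'" using ex_bij_betw_nat_finite[OF finU'] by blast
  have kU: "k i \<in> U'" if "i < card U'" for i using k that by (auto simp: bij_betw_def)
  have kk: "k i \<bullet> k j = (if i = j then 1 else 0)" if "i < card U'" "j < card U'" for i j
  proof (cases "i = j")
    case True thus ?thesis using U'nn kU that by simp
  next
    case False
    hence "k i \<noteq> k j" using k that by (auto simp: bij_betw_def inj_on_def)
    thus ?thesis using uu' kU that False by simp
  qed
  have hk: "h i \<bullet> k j = 0" "k j \<bullet> h i = 0" if "i < r" "j < card U'" for i j
    using tu'[of "h i" "k j"] kU[OF that(2)] that(1) by (auto simp: T_def inner_commute)
  have gk: "g i \<bullet> k j = 0" "k j \<bullet> g i = 0" if "i < r" "j < card U'" for i j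
    using tu'[of "g i" "k j"] kU[OF that(2)] that(1) by (auto simp: T_def inner_commute)
  define e where "e = (\<lambda>i. if i < r then h i else if i < 2 * r then g (i - r) else k (i - 2 * r))"
  define Wp where "Wp = (\<lambda>w. \<forall>i<r. h i \<bullet> w = 0 \<and> g i \<bullet> w = 0)"
  have XW: "X w = 0" if "Wp w" for w
  proof -
    have "orthogonal (X w) b" if b: "b \<in> B" for b
    proof (cases "X b = 0")
      case True thus ?thesis by (simp add: orthogonal_def Xs)
    next
      case False
      hence "b \<in> F" using b by (simp add: F_def)
      then obtain i where i: "i < r" "b = h i" using h by (auto simp: bij_betw_def)
      have "X w \<bullet> b = w \<bullet> X b" by (rule Xs)
      also have "\<dots> = lam i * (w \<bullet> h i)" using eig[OF i(1)] i(2) by simp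
      also have "\<dots> = 0" using \<open>Wp w\<close> i(1) by (simp add: Wp_def inner_commute)
      finally show ?thesis by (simp add: orthogonal_def)
    qed
    hence "orthogonal (X w) (X w)" using orthogonal_to_span[of "X w" B "X w"] B(3) by simp
    thus ?thesis by (simp add: orthogonal_def)
  qed
  have PW: "Wp (P w)" if "Wp w" for w
    unfolding Wp_def
  proof (intro allI impI conjI)
    fix i assume i: "i < r"
    show "h i \<bullet> P w = 0" using that i by (simp add: Ps[symmetric] Pf Wp_def)
    show "g i \<bullet> P w = 0" using that i by (simp add: Ps[symmetric] Pg Wp_def)
  qed
  have YW: "Wp (Y w)" if "Wp w" for w
    unfolding Wp_def
  proof (intro allI impI conjI)
    fix i assume i: "i < r"
    show "h i \<bullet> Y w = 0" using that i by (simp add: Ys[symmetric] Yh)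
    show "g i \<bullet> Y w = 0" using that i by (simp add: Ys[symmetric] Yg Wp_def)
  qed
  have W0: "X w = 0 \<and> Y w = 0 \<and> P w = 0" if "Wp w" for w
  proof -
    have Xw: "X w = 0" using XW[OF that] .
    have YYw: "Y (Y w) = 4 *\<^sub>R P (P w)" using PP[of w] Xw by simp
    have PYw: "P (Y w) = 0" using XP[of w] XW[OF PW[OF that]] by simp
    have YYYw: "Y (Y (Y w)) = 0" using PP[of "Y w"] XW[OF YW[OF that]] PYw by simp
    have "Y (Y w) \<bullet> Y (Y w) = Y w \<bullet> Y (Y (Y w))" by (rule Ys)
    hence "Y (Y w) = 0" using YYYw by simp
    hence "Y w \<bullet> Y w = 0" using Ys[of w "Y w"] by simp
    hence Yw: "Y w = 0" by simp
    hence "P (P w) = 0" using YYw by simp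
    hence "P w \<bullet> P w = 0" using Ps[of w "P w"] by simp
    hence "P w = 0" by simp
    with Xw Yw show ?thesis by simp
  qed
  show ?thesis
  proof (intro exI[of _ e] exI[of _ r] exI[of _ lam] conjI allI impI)
    show "2 * r \<le> DIM('a)" using cardsum by simp
  next
    fix i j assume i: "i < DIM('a)" and j: "j < DIM('a)"
    show "e i \<bullet> e j = (if i = j then 1 else 0)"
      using i j cardsum hh gg hg gh hk gk kk
      unfolding e_def by auto
  next
    fix i assume "i < r" thus "lam i \<noteq> 0" by (rule lam0)
  next
    fix i assume i: "i < r"
    have e1: "e i = h i" and e2: "e (r + i) = g i" using i by (auto simp: e_def)
    show "jacobi_op R x (e i) = lam i *\<^sub>R e i" using eig[OF i] e1 by (simp add: X_def)
    show "jacobi_op R x (e (r + i)) = 0" using Xg[OF i] e2 by (simp add: X_def)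
    show "jacobi_op R y (e i) = 0" using Yh[OF i] e1 by (simp add: Y_def)
    show "jacobi_op R y (e (r + i)) = lam i *\<^sub>R e (r + i)" using Yg[OF i] e2 by (simp add: Y_def)
    show "pjacobi_op R x y (e i) = (lam i / 2) *\<^sub>R e (r + i)" using Pf[OF i] e1 e2 by (simp add: P_def)
    show "pjacobi_op R x y (e (r + i)) = (lam i / 2) *\<^sub>R e i" using Pg[OF i] e1 e2 by (simp add: P_def)
  next
    fix i assume i: "2 * r \<le> i \<and> i < DIM('a)"
    hence ei: "e i = k (i - 2 * r)" by (simp add: e_def)
    have "i - 2 * r < card U'" using i cardsum by linarith
    hence "k (i - 2 * r) \<in> U'" by (rule kU)
    hence "Wp (e i)" unfolding ei Wp_def using tu' by (auto simp: T_def)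
    note w = W0[OF this]
    show "jacobi_op R x (e i) = 0" using w by (simp add: X_def)
    show "jacobi_op R y (e i) = 0" using w by (simp add: Y_def)
    show "pjacobi_op R x y (e i) = 0" using w by (simp add: P_def)
  qed
qed

end

theorem lemma2p2:
  fixes R :: "'a::euclidean_space \<Rightarrow> 'a \<Rightarrow> 'a \<Rightarrow> 'a \<Rightarrow> real"
    and x y :: 'a
  assumes dim: "DIM('a) \<ge> 3"
    and acr: "alg_curv_tensor R"
    and jt: "jacobi_tsankov R"
    and rk: "\<forall>v. jrank R v < DIM('a) - 1"
    and x: "norm x = 1"
    and y: "norm y = 1" "x \<bullet> y = 0" "jacobi_op R x y = 0"
  shows
    \<comment> \<open>(1)\<close>
    "(jacobi_op R y x = 0 \<and> jacobi_op R x \<circ> jacobi_op R y = (\<lambda>_. 0)) \<and>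
    \<comment> \<open>(2)\<close>
    ((\<forall>v. jacobi_op R y (jacobi_op R y v) + jacobi_op R x (jacobi_op R x v)
             - 4 *\<^sub>R pjacobi_op R x y (pjacobi_op R x y v) = 0)
     \<and> pjacobi_op R x y \<circ> jacobi_op R x = jacobi_op R y \<circ> pjacobi_op R x y
     \<and> jacobi_op R x \<circ> pjacobi_op R x y = pjacobi_op R x y \<circ> jacobi_op R y) \<and>
    \<comment> \<open>(3)\<close>
    (\<forall>z1 z2 l1 l2. norm z1 = 1 \<and> norm z2 = 1 \<and> x \<bullet> z1 = 0 \<and> x \<bullet> z2 = 0 \<and> z1 \<bullet> z2 = 0
        \<and> jacobi_op R x z1 = l1 *\<^sub>R z1 \<and> jacobi_op R x z2 = l2 *\<^sub>R z2 \<and> l1 \<noteq> l2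
        \<longrightarrow> jacobi_op R z1 z2 = 0) \<and>
    \<comment> \<open>(4)\<close>
    (\<exists>(e::nat \<Rightarrow> 'a) (r::nat) (lam::nat \<Rightarrow> real).
        2 * r \<le> DIM('a)
      \<and> (\<forall>i<DIM('a). \<forall>j<DIM('a). e i \<bullet> e j = (if i = j then 1 else 0))
      \<and> (\<forall>i<r. lam i \<noteq> 0)
      \<and> (\<forall>i<r. jacobi_op R x (e i) = lam i *\<^sub>R e i
              \<and> jacobi_op R x (e (r + i)) = 0
              \<and> jacobi_op R y (e i) = 0
              \<and> jacobi_op R y (e (r + i)) = lam i *\<^sub>R e (r + i)
              \<and> pjacobi_op R x y (e i) = (lam i / 2) *\<^sub>R e (r + i)
              \<and> pjacobi_op R x y (e (r + i)) = (lam i / 2) *\<^sub>R e i)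
      \<and> (\<forall>i. 2 * r \<le> i \<and> i < DIM('a) \<longrightarrow>
              jacobi_op R x (e i) = 0 \<and> jacobi_op R y (e i) = 0 \<and> pjacobi_op R x y (e i) = 0))"
proof -
  have "jtc R" unfolding jtc_def jtc_axioms_def acurv_def using acr jt by blast
  then interpret J: jtc R .
  have xx: "x \<bullet> x = y \<bullet> y" using x y(1) by (simp add: dot_square_norm)
  have l1: "jacobi_op R y x = 0 \<and> (\<forall>z. jacobi_op R x (jacobi_op R y z) = 0)"
    by (rule J.L1[OF y(2) xx y(3)])
  have p1: "jacobi_op R y x = 0 \<and> jacobi_op R x \<circ> jacobi_op R y = (\<lambda>_. 0)"
    using l1 by (auto simp: fun_eq_iff)
  have p2: "(\<forall>v. jacobi_op R y (jacobi_op R y v) + jacobi_op R x (jacobi_op R x v)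
             - 4 *\<^sub>R pjacobi_op R x y (pjacobi_op R x y v) = 0)
     \<and> pjacobi_op R x y \<circ> jacobi_op R x = jacobi_op R y \<circ> pjacobi_op R x y
     \<and> jacobi_op R x \<circ> pjacobi_op R x y = pjacobi_op R x y \<circ> jacobi_op R y"
    using J.L2[OF y(2) xx y(3)] by (auto simp: fun_eq_iff)
  have p3: "\<forall>z1 z2 l1 l2. norm z1 = 1 \<and> norm z2 = 1 \<and> x \<bullet> z1 = 0 \<and> x \<bullet> z2 = 0 \<and> z1 \<bullet> z2 = 0
        \<and> jacobi_op R x z1 = l1 *\<^sub>R z1 \<and> jacobi_op R x z2 = l2 *\<^sub>R z2 \<and> l1 \<noteq> l2
        \<longrightarrow> jacobi_op R z1 z2 = 0"
    using J.L3 by blast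
  have p4: "\<exists>(e::nat \<Rightarrow> 'a) (r::nat) (lam::nat \<Rightarrow> real).
        2 * r \<le> DIM('a)
      \<and> (\<forall>i<DIM('a). \<forall>j<DIM('a). e i \<bullet> e j = (if i = j then 1 else 0))
      \<and> (\<forall>i<r. lam i \<noteq> 0)
      \<and> (\<forall>i<r. jacobi_op R x (e i) = lam i *\<^sub>R e i
              \<and> jacobi_op R x (e (r + i)) = 0
              \<and> jacobi_op R y (e i) = 0
              \<and> jacobi_op R y (e (r + i)) = lam i *\<^sub>R e (r + i)
              \<and> pjacobi_op R x y (e i) = (lam i / 2) *\<^sub>R e (r + i)
              \<and> pjacobi_op R x y (e (r + i)) = (lam i / 2) *\<^sub>R e i)
      \<and> (\<forall>i. 2 * r \<le> i \<and> i < DIM('a) \<longrightarrow>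
              jacobi_op R x (e i) = 0 \<and> jacobi_op R y (e i) = 0 \<and> pjacobi_op R x y (e i) = 0)"
    by (rule J.L4[OF y(2) xx y(3)])
  show ?thesis using p1 p2 p3 p4 by blast
qed

end
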